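(* Let $D\in\mathbb{R}^{d\times d}$ be diagonal and let $\Theta,\Delta\subset\mathbb{R}^d$ be $\ell_2$-compact, solid, orthosymmetric and quadratically convex. For $\boldsymbol{\theta}\in\Theta,\boldsymbol{\delta}\in\Delta$ one observes independent $\mathbf{x}\sim\mathcal{N}(D\boldsymbol{\theta}+\boldsymbol{\delta},I_d)$ and $\mathbf{y}\sim\mathcal{N}(\boldsymbol{\theta},I_d)$; write $r_{\boldsymbol{\theta},\boldsymbol{\delta}}(\hat{\boldsymbol{\theta}})=\mathbb{E}\|\hat{\boldsymbol{\theta}}(\mathbf{x},\mathbf{y})-\boldsymbol{\theta}\|_2^2$. Let $R_L(\Theta,\Delta,D)=\inf_{A,B\in\mathbb{R}^{d\times d}}\sup_{\boldsymbol{\theta}\in\Theta,\boldsymbol{\delta}\in\Delta}r_{\boldsymbol{\theta},\boldsymbol{\delta}}(A\mathbf{x}+B\mathbf{y})$. Then the minimax linear estimator can be taken coordinatewise: for $\mathbf{a},\mathbf{b}\in\mathbb{R}^d$ let $\hat{\boldsymbol{\theta}}_{\mathbf{a},\mathbf{b}}(\mathbf{x},\mathbf{y})_i=a_ix_i+b_iy_i$; then $$R_L(\Theta,\Delta,D)=\inf_{\mathbf{a},\mathbf{b}\in\mathbb{R}^d}\ \sup_{\boldsymbol{\theta}\in\Theta,\boldsymbol{\delta}\in\Delta}r_{\boldsymbol{\theta},\boldsymbol{\delta}}(\hat{\boldsymbol{\theta}}_{\mathbf{a},\mathbf{b}}).$$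
   Context: A set $\Theta\subset\mathbb{R}^d$ is solid and orthosymmetric if $\boldsymbol{\theta}\in\Theta$ and $|\zeta_i|\le|\theta_i|$ for all $i$ imply $\boldsymbol{\zeta}\in\Theta$. It is quadratically convex if $\{(\theta_1^2,\dots,\theta_d^2):\boldsymbol{\theta}\in\Theta\}$ is convex. *)

theory Defs
  imports "HOL-Probability.Probability"
begin

definition solid_orthosymmetric :: "(real^'n) set \<Rightarrow> bool" where
  "solid_orthosymmetric S \<longleftrightarrow>
     (\<forall>\<theta>\<in>S. \<forall>\<zeta>. (\<forall>i. \<bar>\<zeta>$i\<bar> \<le> \<bar>\<theta>$i\<bar>) \<longrightarrow> \<zeta> \<in> S)"

definition quadratically_convex :: "(real^'n) set \<Rightarrow> bool" where
  "quadratically_convex S \<longleftrightarrow> convex ((\<lambda>\<theta>. \<chi> i. (\<theta>$i)^2) ` S)"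

definition diagonal_matrix :: "real^'n^'n \<Rightarrow> bool" where
  "diagonal_matrix D \<longleftrightarrow> (\<forall>i j. i \<noteq> j \<longrightarrow> D$i$j = 0)"

text \<open>Gaussian N(mu, I_d), as a measure on coordinate functions 'n => real
  (independent standard-variance normal coordinates).\<close>
definition gauss_vec :: "real^'n \<Rightarrow> ('n::finite \<Rightarrow> real) measure" where
  "gauss_vec \<mu> = PiM UNIV (\<lambda>i. density lborel (normal_density (\<mu>$i) 1))"

definition risk :: "real^'n^'n \<Rightarrow> real^'n \<Rightarrow> real^'n
     \<Rightarrow> (real^'n \<Rightarrow> real^'n \<Rightarrow> real^'n) \<Rightarrow> ennreal" where
  "risk D \<theta> \<delta> est =
     (\<integral>\<^sup>+ p. ennreal ((norm (est (vec_lambda (fst p)) (vec_lambda (snd p)) - \<theta>))^2)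
        \<partial>(gauss_vec (D *v \<theta> + \<delta>) \<Otimes>\<^sub>M gauss_vec \<theta>))"

definition R_L :: "(real^'n) set \<Rightarrow> (real^'n) set \<Rightarrow> real^'n^'n \<Rightarrow> ennreal" where
  "R_L \<Theta> \<Delta> D = (INF A. INF B. SUP \<theta>\<in>\<Theta>. SUP \<delta>\<in>\<Delta>.
                     risk D \<theta> \<delta> (\<lambda>x y. A *v x + B *v y))"

definition coord_est :: "real^'n \<Rightarrow> real^'n \<Rightarrow> real^'n \<Rightarrow> real^'n \<Rightarrow> real^'n" where
  "coord_est a b x y = (\<chi> i. a$i * x$i + b$i * y$i)"

end

theory Submission
  imports Defs
begin


lemma one_dim:
  "(\<integral>\<^sup>+ y. ennreal ((c + e * y)^2) \<partial>density lborel (normal_density m 1)) = ennreal ((c + e*m)^2 + e^2)"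
proof -
  have h0: "has_bochner_integral lborel (\<lambda>x. normal_density m 1 x * (x - m) ^ (2 * 0)) 1"
    using normal_moment_even[where \<sigma>=1 and k=0 and \<mu>=m] by simp
  have h1: "has_bochner_integral lborel (\<lambda>x. normal_density m 1 x * (x - m) ^ (2 * 0 + 1)) 0"
    using normal_moment_odd[where \<sigma>=1 and k=0 and \<mu>=m] by simp
  have h2: "has_bochner_integral lborel (\<lambda>x. normal_density m 1 x * (x - m) ^ (2 * 1)) 1"
    using normal_moment_even[where \<sigma>=1 and k=1 and \<mu>=m] by simp
  have "has_bochner_integral lborel (\<lambda>x. (c+e*m)^2 * (normal_density m 1 x * (x - m) ^ (2 * 0))
     + (2*(c+e*m)*e) * (normal_density m 1 x * (x - m) ^ (2 * 0 + 1))
     + e^2 * (normal_density m 1 x * (x - m) ^ (2 * 1))) ((c+e*m)^2 * 1 + (2*(c+e*m)*e) * 0 + e^2 * 1)"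
    by (intro has_bochner_integral_add has_bochner_integral_mult_right h0 h1 h2)
  moreover have "(\<lambda>x. (c+e*m)^2 * (normal_density m 1 x * (x - m) ^ (2 * 0))
     + (2*(c+e*m)*e) * (normal_density m 1 x * (x - m) ^ (2 * 0 + 1))
     + e^2 * (normal_density m 1 x * (x - m) ^ (2 * 1))) = (\<lambda>x. normal_density m 1 x * (c + e * x)^2)"
    by (auto simp: fun_eq_iff power2_eq_square algebra_simps)
  ultimately have hb: "has_bochner_integral lborel (\<lambda>x. normal_density m 1 x * (c + e * x)^2) ((c + e*m)^2 + e^2)"
    by simp
  have "(\<integral>\<^sup>+ y. ennreal ((c + e * y)^2) \<partial>density lborel (normal_density m 1))
     = (\<integral>\<^sup>+ y. ennreal (normal_density m 1 y) * ennreal ((c + e * y)^2) \<partial>lborel)"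
    by (subst nn_integral_density) auto
  also have "\<dots> = (\<integral>\<^sup>+ y. ennreal (normal_density m 1 y * (c + e * y)^2) \<partial>lborel)"
    by (simp add: ennreal_mult')
  also have "\<dots> = ennreal ((c + e*m)^2 + e^2)"
    using hb by (subst nn_integral_eq_integral) (auto simp: has_bochner_integral_iff)
  finally show ?thesis .
qed



abbreviation "NM \<nu> \<equiv> (\<lambda>i. density lborel (normal_density (\<nu> i) 1))"

lemma prob_NM: "prob_space (NM \<nu> i)"
  by (rule prob_space_normal_density) simp

lemma multi:
  fixes \<nu> e :: "'i \<Rightarrow> real"
  assumes "finite I"
  shows "(\<integral>\<^sup>+ y. ennreal ((t + (\<Sum>j\<in>I. e j * y j))^2) \<partial>PiM I (NM \<nu>))
        = ennreal ((t + (\<Sum>j\<in>I. e j * \<nu> j))^2 + (\<Sum>j\<in>I. (e j)^2))"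
  using assms
proof (induction I arbitrary: t rule: finite_induct)
  case empty
  interpret prob_space "PiM {} (NM \<nu>)"
    by (rule prob_space_PiM) (simp add: prob_NM)
  show ?case by (simp add: emeasure_space_1)
next
  case (insert i I)
  interpret product_prob_space "NM \<nu>"
    by (simp add: product_prob_space_def product_prob_space_axioms_def product_sigma_finite_def
        prob_NM prob_space_imp_sigma_finite)
  interpret Q: prob_space "PiM I (NM \<nu>)"
    by (rule prob_space_PiM) (simp add: prob_NM)
  have "(\<integral>\<^sup>+ y. ennreal ((t + (\<Sum>j\<in>insert i I. e j * y j))^2) \<partial>PiM (insert i I) (NM \<nu>))
     = (\<integral>\<^sup>+ x. (\<integral>\<^sup>+ y. ennreal ((t + (\<Sum>j\<in>insert i I. e j * (x(i:=y)) j))^2) \<partial>NM \<nu> i) \<partial>PiM I (NM \<nu>))"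
    using insert by (subst product_nn_integral_insert) auto
  also have "\<dots> = (\<integral>\<^sup>+ x. (\<integral>\<^sup>+ y. ennreal (((t + (\<Sum>j\<in>I. e j * x j)) + e i * y)^2) \<partial>NM \<nu> i) \<partial>PiM I (NM \<nu>))"
  proof (intro nn_integral_cong)
    fix x y
    have "(\<Sum>j\<in>I. e j * (x(i:=y)) j) = (\<Sum>j\<in>I. e j * x j)"
      using insert by (intro sum.cong) auto
    then show "ennreal ((t + (\<Sum>j\<in>insert i I. e j * (x(i:=y)) j))^2) = ennreal (((t + (\<Sum>j\<in>I. e j * x j)) + e i * y)^2)"
      using insert by (simp add: algebra_simps)
  qed
  also have "\<dots> = (\<integral>\<^sup>+ x. ennreal (((t + e i * \<nu> i) + (\<Sum>j\<in>I. e j * x j))^2) + ennreal ((e i)^2) \<partial>PiM I (NM \<nu>))"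
    by (intro nn_integral_cong, subst one_dim) (simp add: algebra_simps ennreal_plus[symmetric] del: ennreal_plus)
  also have "\<dots> = (\<integral>\<^sup>+ x. ennreal (((t + e i * \<nu> i) + (\<Sum>j\<in>I. e j * x j))^2) \<partial>PiM I (NM \<nu>)) + ennreal ((e i)^2)"
    by (subst nn_integral_add) (auto simp: Q.emeasure_space_1)
  also have "\<dots> = ennreal ((t + (\<Sum>j\<in>insert i I. e j * \<nu> j))^2 + (\<Sum>j\<in>insert i I. (e j)^2))"
    using insert by (subst insert.IH) (simp add: algebra_simps ennreal_plus[symmetric] sum_nonneg del: ennreal_plus)
  finally show ?case .
qed



lemma prob_gauss: "prob_space (gauss_vec \<mu>)"
  unfolding gauss_vec_def by (rule prob_space_PiM) (simp add: prob_NM)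

lemma norm_sq_vec: "(norm (v::real^'n))^2 = (\<Sum>i\<in>UNIV. (v$i)^2)"
  by (simp add: norm_vec_def L2_set_def sum_nonneg)

lemma row_int:
  fixes \<mu> \<nu> :: "real^'n" and a b :: "'n \<Rightarrow> real"
  shows "(\<integral>\<^sup>+ p. ennreal (((\<Sum>j\<in>UNIV. a j * fst p j) + (\<Sum>j\<in>UNIV. b j * snd p j) - c)^2)
           \<partial>(gauss_vec \<mu> \<Otimes>\<^sub>M gauss_vec \<nu>))
       = ennreal (((\<Sum>j\<in>UNIV. a j * \<mu>$j) + (\<Sum>j\<in>UNIV. b j * \<nu>$j) - c)^2 + (\<Sum>j\<in>UNIV. (a j)^2) + (\<Sum>j\<in>UNIV. (b j)^2))"
proof -
  interpret G1: prob_space "gauss_vec \<mu>" by (rule prob_gauss)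
  interpret G2: prob_space "gauss_vec \<nu>" by (rule prob_gauss)
  have m: "(\<lambda>p. ennreal (((\<Sum>j\<in>UNIV. a j * fst p j) + (\<Sum>j\<in>UNIV. b j * snd p j) - c)^2)) \<in> borel_measurable (gauss_vec \<mu> \<Otimes>\<^sub>M gauss_vec \<nu>)"
    unfolding gauss_vec_def by measurable
  have m2: "(\<lambda>x. ennreal (((\<Sum>j\<in>UNIV. b j * \<nu>$j) - c + (\<Sum>j\<in>UNIV. a j * x j))^2)) \<in> borel_measurable (gauss_vec \<mu>)"
    unfolding gauss_vec_def by measurable
  have "(\<integral>\<^sup>+ p. ennreal (((\<Sum>j\<in>UNIV. a j * fst p j) + (\<Sum>j\<in>UNIV. b j * snd p j) - c)^2)
           \<partial>(gauss_vec \<mu> \<Otimes>\<^sub>M gauss_vec \<nu>))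
     = (\<integral>\<^sup>+ x. (\<integral>\<^sup>+ y. ennreal ((((\<Sum>j\<in>UNIV. a j * x j) - c) + (\<Sum>j\<in>UNIV. b j * y j))^2) \<partial>gauss_vec \<nu>) \<partial>gauss_vec \<mu>)"
    apply (subst G2.nn_integral_fst[symmetric, OF m])
    apply (simp add: algebra_simps)
    done
  also have "\<dots> = (\<integral>\<^sup>+ x. ennreal (((\<Sum>j\<in>UNIV. b j * \<nu>$j) - c + (\<Sum>j\<in>UNIV. a j * x j))^2) + ennreal (\<Sum>j\<in>UNIV. (b j)^2) \<partial>gauss_vec \<mu>)"
  proof (rule nn_integral_cong)
    fix x :: "'n \<Rightarrow> real"
    have "(\<integral>\<^sup>+ y. ennreal ((((\<Sum>j\<in>UNIV. a j * x j) - c) + (\<Sum>j\<in>UNIV. b j * y j))^2) \<partial>gauss_vec \<nu>)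
       = ennreal ((((\<Sum>j\<in>UNIV. a j * x j) - c) + (\<Sum>j\<in>UNIV. b j * \<nu>$j))^2 + (\<Sum>j\<in>UNIV. (b j)^2))"
      unfolding gauss_vec_def by (rule multi[where \<nu>="\<lambda>j. \<nu>$j"]) simp
    also have "\<dots> = ennreal (((\<Sum>j\<in>UNIV. b j * \<nu>$j) - c + (\<Sum>j\<in>UNIV. a j * x j))^2) + ennreal (\<Sum>j\<in>UNIV. (b j)^2)"
      by (subst ennreal_plus[symmetric]) (auto simp: sum_nonneg algebra_simps)
    finally show "(\<integral>\<^sup>+ y. ennreal ((((\<Sum>j\<in>UNIV. a j * x j) - c) + (\<Sum>j\<in>UNIV. b j * y j))^2) \<partial>gauss_vec \<nu>)
       = ennreal (((\<Sum>j\<in>UNIV. b j * \<nu>$j) - c + (\<Sum>j\<in>UNIV. a j * x j))^2) + ennreal (\<Sum>j\<in>UNIV. (b j)^2)" .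
  qed
  also have "\<dots> = (\<integral>\<^sup>+ x. ennreal (((\<Sum>j\<in>UNIV. b j * \<nu>$j) - c + (\<Sum>j\<in>UNIV. a j * x j))^2) \<partial>gauss_vec \<mu>) + ennreal (\<Sum>j\<in>UNIV. (b j)^2)"
    by (subst nn_integral_add[OF m2]) (auto simp: G1.emeasure_space_1)
  also have "(\<integral>\<^sup>+ x. ennreal (((\<Sum>j\<in>UNIV. b j * \<nu>$j) - c + (\<Sum>j\<in>UNIV. a j * x j))^2) \<partial>gauss_vec \<mu>)
     = ennreal (((\<Sum>j\<in>UNIV. b j * \<nu>$j) - c + (\<Sum>j\<in>UNIV. a j * \<mu>$j))^2 + (\<Sum>j\<in>UNIV. (a j)^2))"
    unfolding gauss_vec_def by (rule multi[where \<nu>="\<lambda>j. \<mu>$j"]) simp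
  also have "\<dots> + ennreal (\<Sum>j\<in>UNIV. (b j)^2) = ennreal (((\<Sum>j\<in>UNIV. a j * \<mu>$j) + (\<Sum>j\<in>UNIV. b j * \<nu>$j) - c)^2 + (\<Sum>j\<in>UNIV. (a j)^2) + (\<Sum>j\<in>UNIV. (b j)^2))"
    by (subst ennreal_plus[symmetric]) (auto simp: sum_nonneg algebra_simps)
  finally show ?thesis .
qed



lemma risk_lin:
  fixes A B D :: "real^'n^'n"
  shows "risk D \<theta> \<delta> (\<lambda>x y. A *v x + B *v y) = ennreal (\<Sum>i\<in>UNIV.
      (((A *v (D *v \<theta> + \<delta>)) + B *v \<theta> - \<theta>)$i)^2 + (\<Sum>j\<in>UNIV. (A$i$j)^2) + (\<Sum>j\<in>UNIV. (B$i$j)^2))"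
proof -
  have m: "\<And>i. (\<lambda>p. ennreal (((\<Sum>j\<in>UNIV. A$i$j * fst p j) + (\<Sum>j\<in>UNIV. B$i$j * snd p j) - \<theta>$i)^2))
     \<in> borel_measurable (gauss_vec (D *v \<theta> + \<delta>) \<Otimes>\<^sub>M gauss_vec \<theta>)"
    unfolding gauss_vec_def by measurable
  have "risk D \<theta> \<delta> (\<lambda>x y. A *v x + B *v y) = (\<integral>\<^sup>+ p. (\<Sum>i\<in>UNIV. ennreal (((\<Sum>j\<in>UNIV. A$i$j * fst p j) + (\<Sum>j\<in>UNIV. B$i$j * snd p j) - \<theta>$i)^2))
           \<partial>(gauss_vec (D *v \<theta> + \<delta>) \<Otimes>\<^sub>M gauss_vec \<theta>))"
    unfolding risk_def
  proof (rule nn_integral_cong)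
    fix p :: "('n \<Rightarrow> real) \<times> ('n \<Rightarrow> real)"
    have "(norm (A *v vec_lambda (fst p) + B *v vec_lambda (snd p) - \<theta>))^2
        = (\<Sum>i\<in>UNIV. ((\<Sum>j\<in>UNIV. A$i$j * fst p j) + (\<Sum>j\<in>UNIV. B$i$j * snd p j) - \<theta>$i)^2)"
      unfolding norm_sq_vec by (simp add: matrix_vector_mult_def)
    then show "ennreal ((norm (A *v vec_lambda (fst p) + B *v vec_lambda (snd p) - \<theta>))^2)
      = (\<Sum>i\<in>UNIV. ennreal (((\<Sum>j\<in>UNIV. A$i$j * fst p j) + (\<Sum>j\<in>UNIV. B$i$j * snd p j) - \<theta>$i)^2))"
      by (simp add: sum_ennreal)
  qed
  also have "\<dots> = (\<Sum>i\<in>UNIV. (\<integral>\<^sup>+ p. ennreal (((\<Sum>j\<in>UNIV. A$i$j * fst p j) + (\<Sum>j\<in>UNIV. B$i$j * snd p j) - \<theta>$i)^2)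
           \<partial>(gauss_vec (D *v \<theta> + \<delta>) \<Otimes>\<^sub>M gauss_vec \<theta>)))"
    by (rule nn_integral_sum) (rule m)
  also have "\<dots> = (\<Sum>i\<in>UNIV. ennreal ((((A *v (D *v \<theta> + \<delta>)) + B *v \<theta> - \<theta>)$i)^2 + (\<Sum>j\<in>UNIV. (A$i$j)^2) + (\<Sum>j\<in>UNIV. (B$i$j)^2)))"
    unfolding row_int by (simp add: matrix_vector_mult_def)
  also have "\<dots> = ennreal (\<Sum>i\<in>UNIV.
      (((A *v (D *v \<theta> + \<delta>)) + B *v \<theta> - \<theta>)$i)^2 + (\<Sum>j\<in>UNIV. (A$i$j)^2) + (\<Sum>j\<in>UNIV. (B$i$j)^2))"
    by (rule sum_ennreal) (intro add_nonneg_nonneg sum_nonneg zero_le_power2)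
  finally show ?thesis .
qed



lemma sign_aux:
  fixes c :: "'n::finite \<Rightarrow> 'n \<Rightarrow> real"
  assumes "finite K"
  shows "\<forall>s. (\<forall>j. s j = 1 \<or> s j = -1) \<longrightarrow> (\<exists>s'. (\<forall>j. s' j = 1 \<or> s' j = -1) \<and>
     (\<Sum>i\<in>UNIV. (\<Sum>j\<in>UNIV-K. s j * c i j)^2 + (\<Sum>j\<in>K. (c i j)^2)) \<le> (\<Sum>i\<in>UNIV. (\<Sum>j\<in>UNIV. s' j * c i j)^2))"
  using assms
proof (induction K rule: finite_induct)
  case empty
  then show ?case by auto
next
  case (insert k K)
  show ?case
  proof (intro allI impI)
    fix s :: "'n \<Rightarrow> real" assume s: "\<forall>j. s j = 1 \<or> s j = -1"
    define u where "u i = (\<Sum>j\<in>UNIV - insert k K. s j * c i j)" for i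
    define R where "R i = (\<Sum>j\<in>K. (c i j)^2)" for i
    define s1 where "s1 = s(k:=1)"
    define s2 where "s2 = s(k:=-1)"
    have UK: "UNIV - K = insert k (UNIV - insert k K)" using insert by auto
    have e1: "(\<Sum>j\<in>UNIV-K. s1 j * c i j) = c i k + u i" for i
      unfolding UK u_def s1_def by (subst sum.insert) (auto intro!: sum.cong)
    have e2: "(\<Sum>j\<in>UNIV-K. s2 j * c i j) = - c i k + u i" for i
      unfolding UK u_def s2_def by (subst sum.insert) (auto intro!: sum.cong)
    have eg: "(\<Sum>j\<in>UNIV-insert k K. s j * c i j)^2 + (\<Sum>j\<in>insert k K. (c i j)^2) = (u i)^2 + (c i k)^2 + R i" for i
      using insert by (simp add: u_def R_def)
    define g where "g t = (\<Sum>i\<in>UNIV. (\<Sum>j\<in>UNIV-K. t j * c i j)^2 + (\<Sum>j\<in>K. (c i j)^2))" for t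
    have g1: "g s1 = (\<Sum>i\<in>UNIV. (c i k + u i)^2 + R i)" unfolding g_def e1 R_def ..
    have g2: "g s2 = (\<Sum>i\<in>UNIV. (- c i k + u i)^2 + R i)" unfolding g_def e2 R_def ..
    have "g s1 + g s2 = 2 * (\<Sum>i\<in>UNIV. (u i)^2 + (c i k)^2 + R i)"
      unfolding g1 g2 sum.distrib[symmetric] sum_distrib_left
      by (intro sum.cong) (auto simp: power2_eq_square algebra_simps)
    then have "(\<Sum>i\<in>UNIV. (u i)^2 + (c i k)^2 + R i) \<le> g s1 \<or> (\<Sum>i\<in>UNIV. (u i)^2 + (c i k)^2 + R i) \<le> g s2"
      by linarith
    moreover have "\<forall>j. s1 j = 1 \<or> s1 j = -1" "\<forall>j. s2 j = 1 \<or> s2 j = -1"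
      using s by (auto simp: s1_def s2_def)
    ultimately obtain t where t: "\<forall>j. t j = 1 \<or> t j = -1" "(\<Sum>i\<in>UNIV. (u i)^2 + (c i k)^2 + R i) \<le> g t"
      by blast
    from insert.IH t(1) obtain s' where s': "\<forall>j. s' j = 1 \<or> s' j = -1" "g t \<le> (\<Sum>i\<in>UNIV. (\<Sum>j\<in>UNIV. s' j * c i j)^2)"
      unfolding g_def by blast
    show "\<exists>s'. (\<forall>j. s' j = 1 \<or> s' j = -1) \<and>
     (\<Sum>i\<in>UNIV. (\<Sum>j\<in>UNIV-insert k K. s j * c i j)^2 + (\<Sum>j\<in>insert k K. (c i j)^2)) \<le> (\<Sum>i\<in>UNIV. (\<Sum>j\<in>UNIV. s' j * c i j)^2)"
      using s' t(2) eg by (intro exI[of _ s']) auto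
  qed
qed

lemma sign_exists:
  fixes c :: "'n::finite \<Rightarrow> 'n \<Rightarrow> real"
  shows "\<exists>s. (\<forall>j. s j = 1 \<or> s j = -1) \<and> (\<Sum>i\<in>UNIV. (c i i)^2) \<le> (\<Sum>i\<in>UNIV. (\<Sum>j\<in>UNIV. s j * c i j)^2)"
proof -
  obtain s' where s': "\<forall>j. s' j = 1 \<or> s' j = -1"
    "(\<Sum>i\<in>UNIV. (\<Sum>j\<in>UNIV-UNIV. 1 * c i j)^2 + (\<Sum>j\<in>UNIV. (c i j)^2)) \<le> (\<Sum>i\<in>UNIV. (\<Sum>j\<in>UNIV. s' j * c i j)^2)"
    using sign_aux[of UNIV c] by force
  have "(c i i)^2 \<le> (\<Sum>j\<in>UNIV. (c i j)^2)" for i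
    by (rule member_le_sum) auto
  then have "(\<Sum>i\<in>UNIV. (c i i)^2) \<le> (\<Sum>i\<in>UNIV. (\<Sum>j\<in>UNIV-UNIV. 1 * c i j)^2 + (\<Sum>j\<in>UNIV. (c i j)^2))"
    by (auto intro: sum_mono)
  then show ?thesis using s' by (intro exI[of _ s']) auto
qed



definition dm :: "real^'n \<Rightarrow> real^'n^'n" where
  "dm a = (\<chi> i j. if i = j then a$i else 0)"

lemma dm_mult: "(dm a *v v)$i = a$i * v$i"
proof -
  have "(\<Sum>k\<in>UNIV. dm a$i$k * v$k) = (\<Sum>k\<in>UNIV. if k = i then a$i * v$i else 0)"
    by (rule sum.cong) (auto simp: dm_def)
  then show ?thesis by (simp add: matrix_vector_mult_def)
qed

lemma diag_mult: "diagonal_matrix D \<Longrightarrow> (D *v v)$i = D$i$i * v$i"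
proof -
  assume d: "diagonal_matrix D"
  have "(\<Sum>k\<in>UNIV. D$i$k * v$k) = (\<Sum>k\<in>UNIV. if k = i then D$i$i * v$i else 0)"
    using d by (intro sum.cong) (auto simp: diagonal_matrix_def)
  then show ?thesis by (simp add: matrix_vector_mult_def)
qed

lemma dm_sq: "(\<Sum>j\<in>UNIV. ((dm a)$i$j)^2) = (a$i)^2"
proof -
  have "(\<Sum>j\<in>UNIV. ((dm a)$i$j)^2) = (\<Sum>j\<in>UNIV. if j = i then (a$i)^2 else 0)"
    by (rule sum.cong) (auto simp: dm_def)
  then show ?thesis by simp
qed

lemma coord_eq: "coord_est a b = (\<lambda>x y. dm a *v x + dm b *v y)"
  by (auto simp: fun_eq_iff vec_eq_iff coord_est_def dm_mult)

lemma key: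
  fixes A B D :: "real^'n^'n"
  assumes D: "diagonal_matrix D" and sT: "solid_orthosymmetric \<Theta>" and sD: "solid_orthosymmetric \<Delta>"
    and th: "\<theta> \<in> \<Theta>" and de: "\<delta> \<in> \<Delta>"
  shows "\<exists>\<theta>'\<in>\<Theta>. \<exists>\<delta>'\<in>\<Delta>. risk D \<theta> \<delta> (coord_est (\<chi> i. A$i$i) (\<chi> i. B$i$i)) \<le> risk D \<theta>' \<delta>' (\<lambda>x y. A *v x + B *v y)"
proof -
  define c where "c i j = A$i$j * (D$j$j * \<theta>$j + \<delta>$j) + B$i$j * \<theta>$j - (if i = j then \<theta>$j else 0)" for i j
  obtain s where s: "\<forall>j. s j = 1 \<or> s j = -1" and sc: "(\<Sum>i\<in>UNIV. (c i i)^2) \<le> (\<Sum>i\<in>UNIV. (\<Sum>j\<in>UNIV. s j * c i j)^2)"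
    using sign_exists[of c] by blast
  define \<theta>' where "\<theta>' = (\<chi> j. s j * \<theta>$j)"
  define \<delta>' where "\<delta>' = (\<chi> j. s j * \<delta>$j)"
  have abs_s: "\<bar>s j * x\<bar> = \<bar>x\<bar>" for j x
    using s[rule_format, of j] by (auto simp: abs_mult)
  have th': "\<theta>' \<in> \<Theta>"
    using sT th unfolding solid_orthosymmetric_def \<theta>'_def by (auto simp: abs_s)
  have de': "\<delta>' \<in> \<Delta>"
    using sD de unfolding solid_orthosymmetric_def \<delta>'_def by (auto simp: abs_s)
  have F1: "((dm (\<chi> i. A$i$i) *v (D *v \<theta> + \<delta>)) + dm (\<chi> i. B$i$i) *v \<theta> - \<theta>)$i = c i i" for i
    by (simp add: dm_mult diag_mult[OF D] c_def algebra_simps)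
  have F2: "((A *v (D *v \<theta>' + \<delta>')) + B *v \<theta>' - \<theta>')$i = (\<Sum>j\<in>UNIV. s j * c i j)" for i
  proof -
    have "(\<Sum>j\<in>UNIV. s j * c i j) = (\<Sum>j\<in>UNIV. A$i$j * (D$j$j * (s j * \<theta>$j) + s j * \<delta>$j))
        + (\<Sum>j\<in>UNIV. B$i$j * (s j * \<theta>$j)) - (\<Sum>j\<in>UNIV. if j = i then s i * \<theta>$i else 0)"
      unfolding sum.distrib[symmetric] sum_subtractf[symmetric]
      by (rule sum.cong) (auto simp: c_def algebra_simps)
    also have "\<dots> = ((A *v (D *v \<theta>' + \<delta>')) + B *v \<theta>' - \<theta>')$i"
      by (simp add: matrix_vector_mult_def[of A] matrix_vector_mult_def[of B] diag_mult[OF D] \<theta>'_def \<delta>'_def)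
    finally show ?thesis by simp
  qed
  have F4: "(M$i$i)^2 \<le> (\<Sum>j\<in>UNIV. (M$i$j)^2)" for M :: "real^'n^'n" and i
    by (rule member_le_sum) auto
  have "risk D \<theta> \<delta> (coord_est (\<chi> i. A$i$i) (\<chi> i. B$i$i))
      = ennreal (\<Sum>i\<in>UNIV. (c i i)^2 + (A$i$i)^2 + (B$i$i)^2)"
    unfolding coord_eq risk_lin F1 dm_sq by simp
  also have "\<dots> \<le> ennreal (\<Sum>i\<in>UNIV. (\<Sum>j\<in>UNIV. s j * c i j)^2 + (\<Sum>j\<in>UNIV. (A$i$j)^2) + (\<Sum>j\<in>UNIV. (B$i$j)^2))"
  proof (rule ennreal_leI)
    have "(\<Sum>i\<in>UNIV. (A$i$i)^2 + (B$i$i)^2) \<le> (\<Sum>i\<in>UNIV. (\<Sum>j\<in>UNIV. (A$i$j)^2) + (\<Sum>j\<in>UNIV. (B$i$j)^2))"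
      by (intro sum_mono add_mono F4)
    with sc show "(\<Sum>i\<in>UNIV. (c i i)^2 + (A$i$i)^2 + (B$i$i)^2) \<le> (\<Sum>i\<in>UNIV. (\<Sum>j\<in>UNIV. s j * c i j)^2 + (\<Sum>j\<in>UNIV. (A$i$j)^2) + (\<Sum>j\<in>UNIV. (B$i$j)^2))"
      by (simp add: sum.distrib add.assoc)
  qed
  also have "\<dots> = risk D \<theta>' \<delta>' (\<lambda>x y. A *v x + B *v y)"
    unfolding risk_lin F2 ..
  finally show ?thesis using th' de' by blast
qed

theorem lemma3:
  fixes D :: "real^'n^'n" and \<Theta> \<Delta> :: "(real^'n) set"
  assumes "diagonal_matrix D"
    and "compact \<Theta>" and "solid_orthosymmetric \<Theta>" and "quadratically_convex \<Theta>"
    and "compact \<Delta>" and "solid_orthosymmetric \<Delta>" and "quadratically_convex \<Delta>"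
  shows "R_L \<Theta> \<Delta> D =
    (INF a. INF b. SUP \<theta>\<in>\<Theta>. SUP \<delta>\<in>\<Delta>. risk D \<theta> \<delta> (coord_est a b))"
proof (rule antisym)
  show "R_L \<Theta> \<Delta> D \<le> (INF a. INF b. SUP \<theta>\<in>\<Theta>. SUP \<delta>\<in>\<Delta>. risk D \<theta> \<delta> (coord_est a b))"
    unfolding R_L_def
  proof (intro INF_greatest)
    fix a b :: "real^'n"
    have "(INF A. INF B. SUP \<theta>\<in>\<Theta>. SUP \<delta>\<in>\<Delta>. risk D \<theta> \<delta> (\<lambda>x y. A *v x + B *v y))
       \<le> (SUP \<theta>\<in>\<Theta>. SUP \<delta>\<in>\<Delta>. risk D \<theta> \<delta> (\<lambda>x y. dm a *v x + dm b *v y))"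
      by (rule INF_lower2[OF UNIV_I], rule INF_lower2[OF UNIV_I], rule order_refl)
    then show "(INF A. INF B. SUP \<theta>\<in>\<Theta>. SUP \<delta>\<in>\<Delta>. risk D \<theta> \<delta> (\<lambda>x y. A *v x + B *v y))
       \<le> (SUP \<theta>\<in>\<Theta>. SUP \<delta>\<in>\<Delta>. risk D \<theta> \<delta> (coord_est a b))"
      by (simp add: coord_eq)
  qed
  show "(INF a. INF b. SUP \<theta>\<in>\<Theta>. SUP \<delta>\<in>\<Delta>. risk D \<theta> \<delta> (coord_est a b)) \<le> R_L \<Theta> \<Delta> D"
    unfolding R_L_def
  proof (intro INF_greatest)
    fix A B :: "real^'n^'n"
    have "(SUP \<theta>\<in>\<Theta>. SUP \<delta>\<in>\<Delta>. risk D \<theta> \<delta> (coord_est (\<chi> i. A$i$i) (\<chi> i. B$i$i)))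
       \<le> (SUP \<theta>\<in>\<Theta>. SUP \<delta>\<in>\<Delta>. risk D \<theta> \<delta> (\<lambda>x y. A *v x + B *v y))"
    proof (intro SUP_least)
      fix \<theta> \<delta> assume "\<theta> \<in> \<Theta>" "\<delta> \<in> \<Delta>"
      then obtain \<theta>' \<delta>' where t: "\<theta>' \<in> \<Theta>" "\<delta>' \<in> \<Delta>"
        and le: "risk D \<theta> \<delta> (coord_est (\<chi> i. A$i$i) (\<chi> i. B$i$i)) \<le> risk D \<theta>' \<delta>' (\<lambda>x y. A *v x + B *v y)"
        using key[OF assms(1,3,6)] by blast
      show "risk D \<theta> \<delta> (coord_est (\<chi> i. A$i$i) (\<chi> i. B$i$i)) \<le> (SUP \<theta>\<in>\<Theta>. SUP \<delta>\<in>\<Delta>. risk D \<theta> \<delta> (\<lambda>x y. A *v x + B *v y))"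
        using le by (intro SUP_upper2[OF t(1)] SUP_upper2[OF t(2)])
    qed
    then show "(INF a. INF b. SUP \<theta>\<in>\<Theta>. SUP \<delta>\<in>\<Delta>. risk D \<theta> \<delta> (coord_est a b))
       \<le> (SUP \<theta>\<in>\<Theta>. SUP \<delta>\<in>\<Delta>. risk D \<theta> \<delta> (\<lambda>x y. A *v x + B *v y))"
      by (intro INF_lower2[OF UNIV_I] INF_lower2[OF UNIV_I])
  qed
qed

end
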